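(* Let $\epsilon>0$, $\zeta>1$, and let $N_\epsilon=\{(x,y)\in\mathbb{R}^2: 0<x^2+y^2<\epsilon^2\}$ with the Lorentzian metric $ds^2=4\{(y^2-(\zeta-1)x^2)\,dx^2+(x^2-(\zeta-1)y^2)\,dy^2+2\zeta xy\,dx\,dy\}$, time-oriented so that the function $-x^2+y^2$ increases along future directed timelike curves. Then $(N_\epsilon,g)$ is not causally continuous.
   Context: This is the neighbourhood geometry of type $(1,1)$ (the "trousers"): the Morse metric $g_{\mu\nu}=h_{\mu\nu}|df|_h^2-\zeta\,\partial_\mu f\,\partial_\nu f$ built from the flat Euclidean metric $h$ and $f=-x^2+y^2$ (plus a constant) on the punctured disc. Chronological relations are computed within $N_\epsilon$: $a\ll b$ iff there is a future directed $C^1$ timelike curve in $N_\epsilon$ from $a$ to $b$; $I^+(a)=\{b:a\ll b\}$, $I^-(a)=\{b:b\ll a\}$; for open $U$, $\downarrow U=\mathrm{Int}\{c:c\ll u\ \forall u\in U\}$, $\uparrow U=\mathrm{Int}\{c:u\ll c\ \forall u\in U\}$. The spacetime is causally continuous if $I^+(a)=\uparrow I^-(a)$ and $I^-(a)=\downarrow I^+(a)$ for all $a\in N_\epsilon$. *)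

theory Defs
  imports "HOL-Analysis.Analysis"
begin

definition N_eps :: "real \<Rightarrow> (real \<times> real) set" where
  "N_eps \<epsilon> = {p. 0 < (fst p)^2 + (snd p)^2 \<and> (fst p)^2 + (snd p)^2 < \<epsilon>^2}"

definition gmet :: "real \<Rightarrow> real \<times> real \<Rightarrow> real \<times> real \<Rightarrow> real" where
  "gmet \<zeta> p v = 4 * (((snd p)^2 - (\<zeta> - 1) * (fst p)^2) * (fst v)^2
                    + ((fst p)^2 - (\<zeta> - 1) * (snd p)^2) * (snd v)^2
                    + 2 * \<zeta> * fst p * snd p * fst v * snd v)"

text \<open>Future directed timelike: g(v,v) < 0 and df(v) > 0 with f = -x^2+y^2.\<close>
definition fut_timelike :: "real \<Rightarrow> real \<times> real \<Rightarrow> real \<times> real \<Rightarrow> bool" where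
  "fut_timelike \<zeta> p v \<longleftrightarrow> gmet \<zeta> p v < 0 \<and> -2 * fst p * fst v + 2 * snd p * snd v > 0"

definition chron :: "real \<Rightarrow> real \<Rightarrow> real \<times> real \<Rightarrow> real \<times> real \<Rightarrow> bool" where
  "chron \<epsilon> \<zeta> a b \<longleftrightarrow>
     (\<exists>\<gamma> \<gamma>'. \<gamma> 0 = a \<and> \<gamma> 1 = b \<and> continuous_on {0..1} \<gamma>' \<and>
        (\<forall>t\<in>{0..1::real}. \<gamma> t \<in> N_eps \<epsilon> \<and>
            (\<gamma> has_vector_derivative \<gamma>' t) (at t within {0..1}) \<and>
            fut_timelike \<zeta> (\<gamma> t) (\<gamma>' t)))"

definition Ifut :: "real \<Rightarrow> real \<Rightarrow> real \<times> real \<Rightarrow> (real \<times> real) set" where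
  "Ifut \<epsilon> \<zeta> a = {b. chron \<epsilon> \<zeta> a b}"

definition Ipast :: "real \<Rightarrow> real \<Rightarrow> real \<times> real \<Rightarrow> (real \<times> real) set" where
  "Ipast \<epsilon> \<zeta> a = {b. chron \<epsilon> \<zeta> b a}"

definition down :: "real \<Rightarrow> real \<Rightarrow> (real \<times> real) set \<Rightarrow> (real \<times> real) set" where
  "down \<epsilon> \<zeta> U = interior {c \<in> N_eps \<epsilon>. \<forall>u\<in>U. chron \<epsilon> \<zeta> c u}"

definition up :: "real \<Rightarrow> real \<Rightarrow> (real \<times> real) set \<Rightarrow> (real \<times> real) set" where
  "up \<epsilon> \<zeta> U = interior {c \<in> N_eps \<epsilon>. \<forall>u\<in>U. chron \<epsilon> \<zeta> u c}"

definition causally_continuous :: "real \<Rightarrow> real \<Rightarrow> bool" where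
  "causally_continuous \<epsilon> \<zeta> \<longleftrightarrow>
     (\<forall>a\<in>N_eps \<epsilon>. Ifut \<epsilon> \<zeta> a = up \<epsilon> \<zeta> (Ipast \<epsilon> \<zeta> a)
                  \<and> Ipast \<epsilon> \<zeta> a = down \<epsilon> \<zeta> (Ifut \<epsilon> \<zeta> a))"

end

theory Submission
  imports Defs
begin


lemma w1_bound:
  fixes k N0 M0 M2 E lam :: real
  assumes k: "k > 0" and s: "N0 < 0" "M0 > 0" "M2 < 0"
    and w0: "((M0 - N0) / (2*k))^2 + ((N0 + M0) / 2)^2 < E"
    and c: "M2^2 * (1 + 2 * k^2) < 8 * k^2 * E"
    and lam: "lam = 1 / (2 * (1 + k^2))"
  shows "((M2/2 - lam * N0) / (2*k))^2 + ((lam * N0 + M2/2) / 2)^2 < E"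
proof -
  define a where "a = - lam * N0"
  define b where "b = - M2 / 2"
  have lp: "lam > 0" using lam k by (simp add: add_pos_nonneg)
  have a: "a \<ge> 0" unfolding a_def using lp s by (simp add: mult_nonneg_nonpos)
  have b: "b > 0" unfolding b_def using s by simp
  have k2: "k^2 > 0" using k by simp
  have e1: "M2/2 - lam * N0 = a - b" "lam * N0 + M2/2 = -(a + b)" unfolding a_def b_def by simp_all
  have "(a - b)^2 \<le> a^2 + b^2" using a b by (simp add: power2_eq_square algebra_simps)
  have "(a + b)^2 \<le> 2 * a^2 + 2 * b^2"
  proof -
    have "0 \<le> (a - b)^2" by simp
    then show ?thesis by (simp add: power2_eq_square algebra_simps)
  qed
  have L: "((M2/2 - lam * N0) / (2*k))^2 + ((lam * N0 + M2/2) / 2)^2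
        = (a - b)^2 / (4 * k^2) + (a + b)^2 / 4"
    unfolding e1 by (simp add: power_divide power2_eq_square algebra_simps)
  also have "\<dots> \<le> (a^2 + b^2) / (4 * k^2) + (2 * a^2 + 2 * b^2) / 4"
    using \<open>(a - b)^2 \<le> a^2 + b^2\<close> \<open>(a + b)^2 \<le> 2 * a^2 + 2 * b^2\<close> k2
    by (intro add_mono divide_right_mono) auto
  also have "\<dots> = a^2 * ((1 + 2*k^2) / (4*k^2)) + b^2 * ((1 + 2*k^2) / (4*k^2))"
    using k2 by (simp add: field_simps)
  also have "\<dots> < E / 2 + E / 2"
  proof (rule add_le_less_mono)
    have n0: "N0^2 / (4 * k^2) < E"
    proof -
      have "(-N0)^2 \<le> (M0 - N0)^2" using s by (intro power_mono) auto
      then have "N0^2 \<le> (M0 - N0)^2" by simp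
      then have "N0^2 / (4*k^2) \<le> ((M0 - N0) / (2*k))^2" using k2 by (simp add: power_divide divide_right_mono)
      moreover have "0 \<le> ((N0 + M0) / 2)^2" by simp
      ultimately show ?thesis using w0 by linarith
    qed
    have "a^2 = lam^2 * N0^2" unfolding a_def by (simp add: power2_eq_square)
    then have "a^2 * ((1 + 2*k^2) / (4*k^2)) = (lam^2 * (1 + 2*k^2)) * (N0^2 / (4*k^2))" by simp
    also have "\<dots> \<le> (1/2) * (N0^2 / (4*k^2))"
    proof (rule mult_right_mono)
      have "lam^2 * (1 + 2*k^2) = (1 + 2*k^2) / (4 * (1 + k^2)^2)" unfolding lam by (simp add: power2_eq_square algebra_simps)
      also have "\<dots> \<le> 1/2"
      proof -
        have "2 * (1 + k^2)^2 = 2 + 4*k^2 + 2*(k^2)^2" by (simp add: power2_eq_square algebra_simps)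
        moreover have "0 \<le> (k^2)^2" by simp
        ultimately have "1 + 2*k^2 \<le> 2 * (1 + k^2)^2" using k2 by linarith
        then show ?thesis using k2 by (simp add: divide_le_eq)
      qed
      finally show "lam^2 * (1 + 2*k^2) \<le> 1/2" .
    qed simp
    also have "\<dots> \<le> E / 2" using n0 by simp
    finally show "a^2 * ((1 + 2*k^2) / (4*k^2)) \<le> E / 2" .
    have "b^2 * ((1 + 2*k^2) / (4*k^2)) = (M2^2 * (1 + 2 * k^2)) / (16 * k^2)" unfolding b_def
      by (simp add: power2_eq_square field_simps)
    also have "\<dots> < (8 * k^2 * E) / (16 * k^2)" using c k2 by (intro divide_strict_right_mono) auto
    also have "\<dots> = E / 2" using k2 by simp
    finally show "b^2 * ((1 + 2*k^2) / (4*k^2)) < E / 2" .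
  qed
  finally show ?thesis by simp
qed


definition cpx :: "real \<times> real \<Rightarrow> complex" where "cpx p = Complex (fst p) (snd p)"
definition NNf :: "real \<Rightarrow> complex \<Rightarrow> real" where "NNf k w = Im w - k * Re w"
definition MMf :: "real \<Rightarrow> complex \<Rightarrow> real" where "MMf k w = Im w + k * Re w"

lemma ft_iff:
  assumes k: "k > 0" "k^2 = \<zeta> - 1"
  shows "fut_timelike \<zeta> p v \<longleftrightarrow> NNf k (2 * cpx p * cpx v) > 0 \<and> MMf k (2 * cpx p * cpx v) < 0"
proof -
  define P where "P = 2 * (fst p * fst v - snd p * snd v)"
  define Q where "Q = 2 * (fst p * snd v + snd p * fst v)"
  have g: "gmet \<zeta> p v = Q^2 - k^2 * P^2"
    unfolding gmet_def P_def Q_def k(2) by (simp add: algebra_simps power2_eq_square)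
  have f: "-2 * fst p * fst v + 2 * snd p * snd v = - P" unfolding P_def by simp
  have nm: "NNf k (2 * cpx p * cpx v) = Q - k * P" "MMf k (2 * cpx p * cpx v) = Q + k * P"
    unfolding NNf_def MMf_def cpx_def P_def Q_def by (simp_all add: algebra_simps)
  have "(Q^2 - k^2 * P^2 < 0 \<and> -P > 0) \<longleftrightarrow> (Q - k * P > 0 \<and> Q + k * P < 0)"
  proof
    assume h: "Q^2 - k^2 * P^2 < 0 \<and> -P > 0"
    then have "Q^2 < (k * (-P))^2" by (simp add: power_mult_distrib)
    then have "\<bar>Q\<bar>^2 < (k * (-P))^2" by simp
    moreover have "k * (-P) \<ge> 0" using h k(1) by (simp add: mult_nonneg_nonpos)
    ultimately have "\<bar>Q\<bar> < k * (-P)" by (rule power_less_imp_less_base)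
    then show "Q - k * P > 0 \<and> Q + k * P < 0" by auto
  next
    assume h: "Q - k * P > 0 \<and> Q + k * P < 0"
    then have "(Q - k*P) * (Q + k*P) < 0" by (simp add: mult_pos_neg)
    moreover have "k * P < 0" using h by linarith
    ultimately show "Q^2 - k^2 * P^2 < 0 \<and> -P > 0" using k(1)
      by (auto simp: algebra_simps power2_eq_square zero_less_mult_iff mult_less_0_iff)
  qed
  then show ?thesis unfolding fut_timelike_def g f nm by simp
qed


lemma fst_vd:
  assumes "(\<gamma> has_vector_derivative v) (at x within S)"
  shows "((\<lambda>t. fst (\<gamma> t)) has_real_derivative fst v) (at x within S)"
    "((\<lambda>t. snd (\<gamma> t)) has_real_derivative snd v) (at x within S)"
  using bounded_linear.has_vector_derivative[OF bounded_linear_fst assms]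
    bounded_linear.has_vector_derivative[OF bounded_linear_snd assms]
  by (simp_all add: has_real_derivative_iff_has_vector_derivative)

lemma curve_mono:
  assumes k: "k > 0" "k^2 = \<zeta> - 1"
    and cv: "\<forall>t\<in>{0..1::real}. (\<gamma> has_vector_derivative \<gamma>' t) (at t within {0..1}) \<and> fut_timelike \<zeta> (\<gamma> t) (\<gamma>' t)"
    and st: "0 \<le> s" "s < t" "t \<le> 1"
  shows "NNf k ((cpx (\<gamma> s))^2) < NNf k ((cpx (\<gamma> t))^2) \<and> MMf k ((cpx (\<gamma> t))^2) < MMf k ((cpx (\<gamma> s))^2)"
proof -
  define F where "F x = 2 * fst (\<gamma> x) * snd (\<gamma> x) - k * ((fst (\<gamma> x))^2 - (snd (\<gamma> x))^2)" for x
  define G where "G x = 2 * fst (\<gamma> x) * snd (\<gamma> x) + k * ((fst (\<gamma> x))^2 - (snd (\<gamma> x))^2)" for x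
  define DF where "DF x = NNf k (2 * cpx (\<gamma> x) * cpx (\<gamma>' x))" for x
  define DG where "DG x = MMf k (2 * cpx (\<gamma> x) * cpx (\<gamma>' x))" for x
  have FN: "F x = NNf k ((cpx (\<gamma> x))^2)" for x
    unfolding F_def NNf_def cpx_def by (simp add: power2_eq_square algebra_simps)
  have GM: "G x = MMf k ((cpx (\<gamma> x))^2)" for x
    unfolding G_def MMf_def cpx_def by (simp add: power2_eq_square algebra_simps)
  have dF: "(F has_real_derivative DF x) (at x within {s..t})" and
       dG: "(G has_real_derivative DG x) (at x within {s..t})" and
       pos: "DF x > 0 \<and> DG x < 0"
    if "s \<le> x" "x \<le> t" for x
  proof -
    have x01: "x \<in> {0..1}" using that st by auto
    have vd: "(\<gamma> has_vector_derivative \<gamma>' x) (at x within {0..1})" and ft: "fut_timelike \<zeta> (\<gamma> x) (\<gamma>' x)"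
      using cv x01 by auto
    have sub: "{s..t} \<subseteq> {0..1}" using st by auto
    note d1 = has_field_derivative_subset[OF fst_vd(1)[OF vd] sub]
    note d2 = has_field_derivative_subset[OF fst_vd(2)[OF vd] sub]
    show "(F has_real_derivative DF x) (at x within {s..t})"
      unfolding F_def[abs_def]
      apply (rule derivative_eq_intros d1 d2 | simp)+
      unfolding DF_def NNf_def cpx_def by (simp add: algebra_simps)
    show "(G has_real_derivative DG x) (at x within {s..t})"
      unfolding G_def[abs_def]
      apply (rule derivative_eq_intros d1 d2 | simp)+
      unfolding DG_def MMf_def cpx_def by (simp add: algebra_simps)
    show "DF x > 0 \<and> DG x < 0" using ft ft_iff[OF k] unfolding DF_def DG_def by auto
  qed
  obtain z1 where z1: "z1 \<in> {s<..<t}" "F t - F s = DF z1 * (t - s)"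
    using mvt_simple[of s t F "\<lambda>x. (*) (DF x)", OF st(2)] dF
    unfolding has_field_derivative_def by auto
  obtain z2 where z2: "z2 \<in> {s<..<t}" "G t - G s = DG z2 * (t - s)"
    using mvt_simple[of s t G "\<lambda>x. (*) (DG x)", OF st(2)] dG
    unfolding has_field_derivative_def by auto
  have "DF z1 > 0" "DG z2 < 0" using pos z1(1) z2(1) by auto
  then have "F t - F s > 0" "G t - G s < 0" using z1 z2 st(2)
    by (auto simp: mult_pos_pos mult_neg_pos)
  then show ?thesis using FN GM by auto
qed


lemma NN_add: "NNf k (a + b) = NNf k a + NNf k b" and NN_scale: "NNf k (r *\<^sub>R a) = r * NNf k a"
  and MM_add: "MMf k (a + b) = MMf k a + MMf k b" and MM_scale: "MMf k (r *\<^sub>R a) = r * MMf k a"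
  and NN_diff: "NNf k (a - b) = NNf k a - NNf k b" and MM_diff: "MMf k (a - b) = MMf k a - MMf k b"
  by (simp_all add: NNf_def MMf_def algebra_simps)

lemma cpx_ReIm[simp]: "cpx (Re z, Im z) = z" by (simp add: cpx_def)

lemma bl_ReIm: "bounded_linear (\<lambda>z::complex. (Re z, Im z))"
  by (rule bounded_linear_Pair[OF bounded_linear_Re bounded_linear_Im])

lemma reach:
  fixes \<epsilon> \<zeta> k :: real and \<mu> u c :: complex
  assumes k: "k > 0" "k^2 = \<zeta> - 1" and mu: "\<mu>^2 = Complex 1 (-k)" and eps: "\<epsilon> > 0"
    and u: "cmod u < \<epsilon>" "NNf k (u^2) < 0" "MMf k (u^2) > 0" "Im (\<mu> * u) < 0"
    and c: "cmod c < \<epsilon>" "NNf k (c^2) > 0" "MMf k (c^2) < 0" "Im (\<mu> * c) < 0"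
       "(MMf k (c^2))^2 * (1 + 2 * k^2) < 8 * k^2 * \<epsilon>^4"
  shows "chron \<epsilon> \<zeta> (Re u, Im u) (Re c, Im c)"
proof -
  have mu0: "\<mu> \<noteq> 0" using mu by (auto simp: complex_eq_iff)
  define N0 where "N0 = NNf k (u^2)"
  define M0 where "M0 = MMf k (u^2)"
  define N2 where "N2 = NNf k (c^2)"
  define M2 where "M2 = MMf k (c^2)"
  define lam where "lam = 1 / (2 * \<zeta>)"
  have z1: "\<zeta> = 1 + k^2" using k by simp
  have k2: "0 < k^2" using k(1) by simp
  have zg: "\<zeta> > 1" using k2 z1 by simp
  have lam: "0 < lam" "lam < 1" unfolding lam_def using zg by (auto simp: field_simps)
  define N1 where "N1 = lam * N0"
  define M1 where "M1 = M2 / 2"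
  define w0 where "w0 = u^2"
  define w2 where "w2 = c^2"
  define w1 where "w1 = Complex ((M1 - N1) / (2*k)) ((N1 + M1) / 2)"
  have NM1: "NNf k w1 = N1" "MMf k w1 = M1"
    unfolding w1_def NNf_def MMf_def using k by (auto simp: field_simps)
  have sN: "N0 < N1" "N1 < 0" "0 < N2" and sM: "M2 < M1" "M1 < 0" "0 < M0"
    using u c lam unfolding N0_def N1_def N2_def M0_def M1_def M2_def
    by (auto simp: mult_pos_neg mult_less_cancel_right_neg)
  define ps where "ps = - N1 / (N2 - N1)"
  have ps: "0 < ps" "ps \<le> 1" unfolding ps_def using sN by (auto simp: field_simps)
  define m where "m = - M2 / (M0 - M2)"
  have m: "0 < m" "m < 1" unfolding m_def using sM by (auto simp: field_simps)
  define h where "h = ps^2 * m"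
  have h: "0 < h" "h \<le> ps" using ps m unfolding h_def
    by (auto simp: power2_eq_square intro: mult_le_one order_trans[of _ "ps * 1"] mult_left_mono)
  define \<phi> where "\<phi> t = (1 - t)^2" for t :: real
  define \<psi> where "\<psi> t = h * t^2 / (1 + h - t)" for t :: real
  define \<phi>' where "\<phi>' t = - 2 * (1 - t)" for t :: real
  define \<psi>' where "\<psi>' t = h * t * (2 + 2 * h - t) / (1 + h - t)^2" for t :: real
  define w where "w t = w1 + \<phi> t *\<^sub>R (w0 - w1) + \<psi> t *\<^sub>R (w2 - w1)" for t
  define w' where "w' t = \<phi>' t *\<^sub>R (w0 - w1) + \<psi>' t *\<^sub>R (w2 - w1)" for t
  define X where "X t = - (\<mu>^2) * w t" for t
  define z where "z t = - \<i> * csqrt (X t) / \<mu>" for t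
  define z' where "z' t = w' t * (\<i> * \<mu> / (2 * csqrt (X t)))" for t
  define \<gamma> where "\<gamma> t = (Re (z t), Im (z t))" for t
  define \<gamma>' where "\<gamma>' t = (Re (z' t), Im (z' t))" for t
  have Nw: "NNf k (w t) = N1 + \<phi> t * (N0 - N1) + \<psi> t * (N2 - N1)"
    and Mw: "MMf k (w t) = M1 + \<phi> t * (M0 - M1) + \<psi> t * (M2 - M1)" for t
    unfolding w_def NN_add NN_scale MM_add MM_scale NN_diff MM_diff NM1
      N0_def N2_def M0_def M2_def w0_def w2_def by simp_all
  have Nw': "NNf k (w' t) = \<phi>' t * (N0 - N1) + \<psi>' t * (N2 - N1)"
    and Mw': "MMf k (w' t) = \<phi>' t * (M0 - M1) + \<psi>' t * (M2 - M1)" for t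
    unfolding w'_def NN_add NN_scale MM_add MM_scale NN_diff MM_diff NM1
      N0_def N2_def M0_def M2_def w0_def w2_def by simp_all
  have den: "1 + h - t > 0" if "t \<le> 1" for t using that h by simp
  have phi: "0 \<le> \<phi> t" "\<phi> t \<le> 1" if "0 \<le> t" "t \<le> 1" for t
    unfolding \<phi>_def using that by (auto simp: power_le_one)
  have psi: "0 \<le> \<psi> t" "\<psi> t \<le> t^2" if "0 \<le> t" "t \<le> 1" for t
  proof -
    show "0 \<le> \<psi> t" unfolding \<psi>_def using den[of t] h that by simp
    have "t * t^2 \<le> 1 * t^2" using that by (intro mult_right_mono) auto
    then have "h * t^2 \<le> t^2 * (1 + h - t)" by (simp add: algebra_simps)
    then show "\<psi> t \<le> t^2" unfolding \<psi>_def using den[of t] that by (simp add: divide_le_eq)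
  qed
  have sum1: "\<phi> t + \<psi> t \<le> 1" if "0 \<le> t" "t \<le> 1" for t
  proof -
    have "(1 - t)^2 + t^2 \<le> 1" using that by (simp add: power2_eq_square algebra_simps mult_left_le_one_le)
    then show ?thesis using psi[OF that] unfolding \<phi>_def by simp
  qed
  have slit: "MMf k (w t) < 0" if "NNf k (w t) = 0" "0 \<le> t" "t \<le> 1" for t
  proof -
    have "\<psi> t * (N2 - N1) \<ge> - N1"
    proof -
      have "\<phi> t * (N0 - N1) \<le> 0" using phi[OF that(2,3)] sN by (simp add: mult_nonneg_nonpos)
      then show ?thesis using that(1) Nw[of t] by linarith
    qed
    moreover have "N2 - N1 > 0" using sN by simp
    ultimately have g1: "\<psi> t \<ge> ps" unfolding ps_def using pos_divide_le_eq[of "N2-N1" "-N1" "\<psi> t"] by simp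
    have "\<psi> t \<le> h / (1 + h - t)"
      unfolding \<psi>_def using den[of t] h that by (auto simp: divide_right_mono power_le_one mult_left_le)
    then have "\<psi> t * (1 + h - t) \<le> h" using den[of t] that by (simp add: le_divide_eq)
    then have "ps * (1 + h - t) \<le> h" using g1 den[of t] that
      by (meson mult_right_mono less_imp_le order_trans)
    then have "ps * (1 - t) \<le> h * (1 - ps)" by (simp add: algebra_simps)
    also have "\<dots> \<le> h" using h ps by (simp add: mult_left_le)
    finally have e1: "ps * (1 - t) \<le> h" .
    have e2: "ps^2 * \<phi> t \<le> h^2" unfolding \<phi>_def
    proof -
      have "(ps * (1 - t))^2 \<le> h^2" using e1 ps that by (intro power_mono) auto
      then show "ps^2 * (1 - t)^2 \<le> h^2" by (simp add: power_mult_distrib)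
    qed
    have Mle: "MMf k (w t) \<le> \<phi> t * M0 + \<psi> t * M2"
    proof -
      have "MMf k (w t) = (1 - \<phi> t - \<psi> t) * M1 + \<phi> t * M0 + \<psi> t * M2" using Mw[of t] by (simp add: algebra_simps)
      moreover have "(1 - \<phi> t - \<psi> t) * M1 \<le> 0" using sum1[OF that(2,3)] sM by (simp add: mult_nonneg_nonpos)
      ultimately show ?thesis by linarith
    qed
    have "\<psi> t * M2 \<le> ps * M2" using g1 sM by (simp add: mult_right_mono_neg)
    moreover have "\<phi> t * M0 < ps * (- M2)"
    proof -
      have "ps^2 * (\<phi> t * M0) \<le> h^2 * M0" using e2 sM by (simp add: mult_right_mono)
      also have "h^2 * M0 = ps^2 * (ps^2 * m * (m * M0))" unfolding h_def by (simp add: power2_eq_square algebra_simps)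
      also have "\<dots> < ps^2 * (ps * (- M2))"
      proof -
        have q: "M0 / (M0 - M2) < 1" using sM by simp
        have "m * M0 = (- M2) * (M0 / (M0 - M2))" unfolding m_def by simp
        also have "\<dots> < - M2 * 1" using q sM by (intro mult_strict_left_mono) auto
        finally have "m * M0 < - M2" by simp
        moreover have "m * (m * M0) \<le> m * M0" using m sM by (intro mult_left_le_one_le) auto
        ultimately have X: "m * (m * M0) < - M2" by linarith
        have X0: "0 \<le> m * (m * M0)" using m sM by simp
        have "ps^2 \<le> ps" using ps by (simp add: power2_eq_square mult_left_le)
        then have "ps^2 * (m * (m * M0)) \<le> ps * (m * (m * M0))" using X0 by (rule mult_right_mono)
        also have "\<dots> < ps * (- M2)" using X ps by (intro mult_strict_left_mono) auto
        finally have "ps^2 * (m * (m * M0)) < ps * (- M2)" .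
        then have "ps^2 * (ps^2 * (m * (m * M0))) < ps^2 * (ps * (- M2))" using ps by (intro mult_strict_left_mono) auto
        then show ?thesis by (simp only: mult.assoc)
      qed
      finally have "ps^2 * (\<phi> t * M0) < ps^2 * (ps * (- M2))" .
      moreover have "ps^2 > 0" using ps by simp
      ultimately show ?thesis using mult_less_cancel_left_pos[of "ps^2" "\<phi> t * M0" "ps * (- M2)"] by simp
    qed
    ultimately show ?thesis using Mle by linarith
  qed
  have cw0: "cmod w0 < \<epsilon>^2" unfolding w0_def using u(1) by (simp add: norm_power power_strict_mono)
  have cw2: "cmod w2 < \<epsilon>^2" unfolding w2_def using c(1) by (simp add: norm_power power_strict_mono)
  have cw1: "cmod w1 < \<epsilon>^2"
  proof -
    have rw0: "Re w0 = (M0 - N0) / (2*k)" "Im w0 = (N0 + M0) / 2"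
      unfolding M0_def N0_def w0_def MMf_def NNf_def using k(1) by simp_all
    have "((M0 - N0) / (2*k))^2 + ((N0 + M0) / 2)^2 < (\<epsilon>^2)^2"
      using cw0 unfolding rw0[symmetric] cmod_power2[symmetric]
      by (intro power_strict_mono) auto
    then have "((M2/2 - lam * N0) / (2*k))^2 + ((lam * N0 + M2/2) / 2)^2 < (\<epsilon>^2)^2"
      using c(5) sN sM k(1) unfolding M2_def[symmetric]
      by (intro w1_bound[of k N0 M0 M2 "(\<epsilon>^2)^2" lam]) (auto simp: lam_def z1)
    then have "(cmod w1)^2 < (\<epsilon>^2)^2" unfolding cmod_power2 w1_def N1_def M1_def by simp
    then show ?thesis by (rule power_less_imp_less_base) simp
  qed
  have wform: "w t = (1 - \<phi> t - \<psi> t) *\<^sub>R w1 + \<phi> t *\<^sub>R w0 + \<psi> t *\<^sub>R w2" for t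
    unfolding w_def by (simp add: algebra_simps scaleR_diff_right scaleR_diff_left)
  have cw: "cmod (w t) < \<epsilon>^2" if "0 \<le> t" "t \<le> 1" for t
  proof -
    define C where "C = max (cmod w1) (max (cmod w0) (cmod w2))"
    have C: "C < \<epsilon>^2" unfolding C_def using cw0 cw1 cw2 by simp
    have a1: "0 \<le> 1 - \<phi> t - \<psi> t" using sum1[OF that] by simp
    have "cmod (w t) \<le> cmod ((1 - \<phi> t - \<psi> t) *\<^sub>R w1) + cmod (\<phi> t *\<^sub>R w0) + cmod (\<psi> t *\<^sub>R w2)"
      unfolding wform by (meson norm_triangle_le norm_triangle_ineq add_mono order_refl)
    also have "\<dots> = (1 - \<phi> t - \<psi> t) * cmod w1 + \<phi> t * cmod w0 + \<psi> t * cmod w2"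
      using a1 phi[OF that] psi[OF that] by simp
    also have "\<dots> \<le> (1 - \<phi> t - \<psi> t) * C + \<phi> t * C + \<psi> t * C"
      using a1 phi[OF that] psi[OF that] unfolding C_def
      by (intro add_mono mult_left_mono) auto
    also have "\<dots> = C" by (simp add: algebra_simps)
    finally show ?thesis using C by linarith
  qed
  have wne: "w t \<noteq> 0" if "0 \<le> t" "t \<le> 1" for t
    using slit[OF _ that] by (auto simp: NNf_def MMf_def)
  have Xn: "X t \<notin> \<real>\<^sub>\<le>\<^sub>0" if "0 \<le> t" "t \<le> 1" for t
  proof
    assume "X t \<in> \<real>\<^sub>\<le>\<^sub>0"
    then have r: "Re (X t) \<le> 0" "Im (X t) = 0" by (auto simp: complex_nonpos_Reals_iff)
    have ReX: "Re (X t) = - (Re (w t) + k * Im (w t))" and ImX: "Im (X t) = - NNf k (w t)"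
      unfolding X_def mu NNf_def by (simp_all add: algebra_simps)
    have "NNf k (w t) = 0" using r ImX by simp
    then have "MMf k (w t) < 0" and q: "Im (w t) = k * Re (w t)" using slit[OF _ that] by (auto simp: NNf_def)
    then have "k * Re (w t) < 0" unfolding MMf_def by simp
    then have "Re (w t) < 0" using k(1) by (simp add: mult_less_0_iff)
    then have "Re (w t) + k * Im (w t) < 0" unfolding q using k2
      by (metis add_neg_neg mult_pos_neg mult.assoc power2_eq_square)
    then show False using r ReX by simp
  qed
  have Sne: "csqrt (X t) \<noteq> 0" if "0 \<le> t" "t \<le> 1" for t
    using Xn[OF that] by auto
  have zsq: "(z t)^2 = w t" for t
    unfolding z_def X_def using mu0 by (simp add: power_divide power_mult_distrib)
  have gN: "\<gamma> t \<in> N_eps \<epsilon>" if "0 \<le> t" "t \<le> 1" for t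
  proof -
    have "(fst (\<gamma> t))^2 + (snd (\<gamma> t))^2 = cmod (w t)"
      unfolding \<gamma>_def zsq[symmetric] norm_power cmod_power2 by simp
    then show ?thesis unfolding N_eps_def using cw[OF that] wne[OF that] by simp
  qed
  define S where "S t = csqrt (X t)" for t
  have dphi: "(\<phi> has_real_derivative \<phi>' t) (at t within {0..1})" for t
    unfolding \<phi>_def[abs_def] \<phi>'_def by (auto intro!: derivative_eq_intros)
  have dpsi: "(\<psi> has_real_derivative \<psi>' t) (at t within {0..1})" if "t \<le> 1" for t
    unfolding \<psi>_def[abs_def] \<psi>'_def using den[OF that]
    by (auto intro!: derivative_eq_intros simp: power2_eq_square field_simps)
  have dw: "(w has_vector_derivative w' t) (at t within {0..1})" if "t \<le> 1" for t
    unfolding w_def[abs_def] w'_def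
    by (auto intro!: derivative_eq_intros dphi dpsi[OF that])
  have dX: "(X has_vector_derivative (- (\<mu>^2) * w' t)) (at t within {0..1})" if "t \<le> 1" for t
    unfolding X_def[abs_def] by (auto intro!: derivative_eq_intros dw[OF that])
  have dS: "(S has_vector_derivative (- (\<mu>^2) * w' t) * inverse (2 * csqrt (X t))) (at t within {0..1})"
    if "0 \<le> t" "t \<le> 1" for t
  proof -
    have "((csqrt \<circ> X) has_vector_derivative (- (\<mu>^2) * w' t) * inverse (2 * csqrt (X t))) (at t within {0..1})"
      by (rule field_vector_diff_chain_within[OF dX[OF that(2)]])
         (rule has_field_derivative_at_within[OF has_field_derivative_csqrt[OF Xn[OF that]]])
    then show ?thesis unfolding S_def o_def by simp
  qed
  have zS: "z t = (- \<i> / \<mu>) * S t" for t unfolding z_def S_def by simp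
  have dz: "(z has_vector_derivative z' t) (at t within {0..1})" if "0 \<le> t" "t \<le> 1" for t
  proof -
    have "((\<lambda>t. (- \<i> / \<mu>) * S t) has_vector_derivative (- \<i> / \<mu>) * ((- (\<mu>^2) * w' t) * inverse (2 * csqrt (X t)))) (at t within {0..1})"
      by (rule has_vector_derivative_mult_right[OF dS[OF that]])
    moreover have "(- \<i> / \<mu>) * ((- (\<mu>^2) * w' t) * inverse (2 * csqrt (X t))) = z' t"
      unfolding z'_def using mu0 Sne[OF that] by (simp add: field_simps power2_eq_square)
    ultimately show ?thesis unfolding zS[abs_def] by simp
  qed
  have dg: "(\<gamma> has_vector_derivative \<gamma>' t) (at t within {0..1})" if "0 \<le> t" "t \<le> 1" for t
    unfolding \<gamma>_def[abs_def] \<gamma>'_def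
    by (rule bounded_linear.has_vector_derivative[OF bl_ReIm dz[OF that]])
  have contS: "continuous_on {0..1} S"
    unfolding continuous_on_eq_continuous_within
    using dS has_vector_derivative_continuous by fastforce
  have contw': "continuous_on {0..1} w'"
    unfolding w'_def[abs_def] \<phi>'_def \<psi>'_def using den h(1)
    by (auto intro!: continuous_intros)
  have contz': "continuous_on {0..1} z'"
    unfolding z'_def[abs_def] S_def[symmetric] using Sne unfolding S_def[symmetric]
    by (auto intro!: continuous_intros contw' contS)
  have contg': "continuous_on {0..1} \<gamma>'"
    unfolding \<gamma>'_def[abs_def] by (auto intro!: continuous_intros contz')
  have ww': "2 * cpx (\<gamma> t) * cpx (\<gamma>' t) = w' t" if "0 \<le> t" "t \<le> 1" for t
    unfolding \<gamma>_def \<gamma>'_def cpx_ReIm z_def z'_def using mu0 Sne[OF that]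
    by (simp add: field_simps)
  have psi'_nn: "0 \<le> \<psi>' t" "0 < t \<Longrightarrow> 0 < \<psi>' t" if "0 \<le> t" "t \<le> 1" for t
    unfolding \<psi>'_def using h(1) that den[OF that(2)] by (auto intro!: divide_nonneg_pos mult_nonneg_nonneg divide_pos_pos mult_pos_pos)
  have ft: "fut_timelike \<zeta> (\<gamma> t) (\<gamma>' t)" if "0 \<le> t" "t \<le> 1" for t
  proof -
    have p1: "0 \<le> \<phi>' t * (N0 - N1)" "\<phi>' t * (M0 - M1) \<le> 0"
      unfolding \<phi>'_def using that sN sM by (auto intro: mult_nonpos_nonpos mult_nonpos_nonneg)
    have p2: "0 \<le> \<psi>' t * (N2 - N1)" "\<psi>' t * (M2 - M1) \<le> 0"
      using psi'_nn[OF that] sN sM by (auto intro: mult_nonneg_nonpos)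
    have "NNf k (w' t) > 0 \<and> MMf k (w' t) < 0"
    proof (cases "t < 1")
      case True
      then have "0 < \<phi>' t * (N0 - N1)" "\<phi>' t * (M0 - M1) < 0"
        unfolding \<phi>'_def using sN sM by (auto intro: mult_neg_neg mult_neg_pos)
      then show ?thesis unfolding Nw' Mw' using p2 by linarith
    next
      case False
      then have "0 < t" using that by simp
      then have "0 < \<psi>' t * (N2 - N1)" "\<psi>' t * (M2 - M1) < 0"
        using psi'_nn[OF that] sN sM by (auto intro: mult_pos_neg)
      then show ?thesis unfolding Nw' Mw' using p1 by linarith
    qed
    then show ?thesis using ft_iff[OF k] ww'[OF that] by simp
  qed
  have w0e: "w 0 = w0" unfolding w_def \<phi>_def \<psi>_def by simp
  have w1e: "w 1 = w2" unfolding w_def \<phi>_def \<psi>_def using h(1) by simp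
  have z0: "z 0 = u"
  proof -
    have "X 0 = (\<i> * \<mu> * u)^2" unfolding X_def w0e w0_def by (simp add: power_mult_distrib)
    moreover have "Re (\<i> * \<mu> * u) > 0" using u(4) by simp
    ultimately have "csqrt (X 0) = \<i> * \<mu> * u" by (simp add: csqrt_square)
    then show ?thesis unfolding z_def using mu0 by (simp add: field_simps)
  qed
  have z1e: "z 1 = c"
  proof -
    have "X 1 = (\<i> * \<mu> * c)^2" unfolding X_def w1e w2_def by (simp add: power_mult_distrib)
    moreover have "Re (\<i> * \<mu> * c) > 0" using c(4) by simp
    ultimately have "csqrt (X 1) = \<i> * \<mu> * c" by (simp add: csqrt_square)
    then show ?thesis unfolding z_def using mu0 by (simp add: field_simps)
  qed
  show ?thesis unfolding chron_def
  proof (intro exI conjI ballI)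
    show "\<gamma> 0 = (Re u, Im u)" "\<gamma> 1 = (Re c, Im c)" unfolding \<gamma>_def z0 z1e by simp_all
    show "continuous_on {0..1} \<gamma>'" by (rule contg')
    fix t :: real assume "t \<in> {0..1}"
    then have t: "0 \<le> t" "t \<le> 1" by auto
    show "\<gamma> t \<in> N_eps \<epsilon>" by (rule gN[OF t])
    show "(\<gamma> has_vector_derivative \<gamma>' t) (at t within {0..1})" by (rule dg[OF t])
    show "fut_timelike \<zeta> (\<gamma> t) (\<gamma>' t)" by (rule ft[OF t])
  qed
qed


lemma curve_props:
  assumes k: "k > 0" "k^2 = \<zeta> - 1" and ch: "chron \<epsilon> \<zeta> x y"
  obtains \<gamma> :: "real \<Rightarrow> real \<times> real" where "\<gamma> 0 = x" "\<gamma> 1 = y" "continuous_on {0..1} \<gamma>" "\<And>t. t \<in> {0..1} \<Longrightarrow> \<gamma> t \<in> N_eps \<epsilon>"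
    "\<And>s t. 0 \<le> s \<Longrightarrow> s < t \<Longrightarrow> t \<le> 1 \<Longrightarrow>
       NNf k ((cpx (\<gamma> s))^2) < NNf k ((cpx (\<gamma> t))^2) \<and> MMf k ((cpx (\<gamma> t))^2) < MMf k ((cpx (\<gamma> s))^2)"
proof -
  obtain \<gamma> \<gamma>' where g: "\<gamma> 0 = x" "\<gamma> 1 = y"
    and all: "\<forall>t\<in>{0..1::real}. \<gamma> t \<in> N_eps \<epsilon> \<and>
            (\<gamma> has_vector_derivative \<gamma>' t) (at t within {0..1}) \<and> fut_timelike \<zeta> (\<gamma> t) (\<gamma>' t)"
    using ch unfolding chron_def by blast
  have cont: "continuous_on {0..1} \<gamma>"
    unfolding continuous_on_eq_continuous_within
    using all has_vector_derivative_continuous by blast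
  show ?thesis
  proof (rule that[of \<gamma>])
    show "\<gamma> 0 = x" "\<gamma> 1 = y" using g by auto
    show "continuous_on {0..1} \<gamma>" by (rule cont)
    show "\<gamma> t \<in> N_eps \<epsilon>" if "t \<in> {0..1}" for t using all that by blast
    show "NNf k ((cpx (\<gamma> s))^2) < NNf k ((cpx (\<gamma> t))^2) \<and> MMf k ((cpx (\<gamma> t))^2) < MMf k ((cpx (\<gamma> s))^2)"
      if "0 \<le> s" "s < t" "t \<le> 1" for s t
      using curve_mono[OF k, of \<gamma> \<gamma>' s t] all that by blast
  qed
qed

lemma NN_mu: "\<mu>^2 = Complex 1 (-k) \<Longrightarrow> NNf k (z^2) = 2 * Re (\<mu> * z) * Im (\<mu> * z)"
proof -
  assume mu: "\<mu>^2 = Complex 1 (-k)"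
  have "(\<mu> * z)^2 = Complex 1 (-k) * z^2" by (simp add: power_mult_distrib mu)
  then have "Im ((\<mu> * z)^2) = NNf k (z^2)" unfolding NNf_def by simp
  moreover have "Im ((\<mu> * z)^2) = 2 * Re (\<mu> * z) * Im (\<mu> * z)" by (simp add: power2_eq_square)
  ultimately show ?thesis by metis
qed

lemma cpx_cont: "continuous_on UNIV cpx"
proof -
  have "cpx = (\<lambda>p. complex_of_real (fst p) + \<i> * complex_of_real (snd p))"
    by (auto simp: cpx_def complex_eq_iff)
  moreover have "continuous_on UNIV (\<lambda>p. complex_of_real (fst p) + \<i> * complex_of_real (snd p))"
    by (intro continuous_intros)
  ultimately show ?thesis by metis
qed

lemma ReIm_cpx[simp]: "(Re (cpx p), Im (cpx p)) = p" by (simp add: cpx_def)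


theorem lemma2:
  fixes \<epsilon> \<zeta> :: real
  assumes "\<epsilon> > 0" and "\<zeta> > 1"
  shows "\<not> causally_continuous \<epsilon> \<zeta>"
proof -
  note eps = assms(1)
  define k where "k = sqrt (\<zeta> - 1)"
  have k: "k > 0" "k^2 = \<zeta> - 1" unfolding k_def using assms(2) by auto
  define m0 where "m0 = csqrt (Complex 1 (-k))"
  have m0sq: "m0^2 = Complex 1 (-k)" unfolding m0_def by simp
  have "Im (m0^2) = -k" using m0sq by simp
  then have m0ri: "2 * Re m0 * Im m0 = -k" by (simp add: power2_eq_square algebra_simps)
  obtain \<mu> where mu: "\<mu>^2 = Complex 1 (-k)" and muI: "Im \<mu> < 0"
  proof (cases "Im m0 < 0")
    case True then show ?thesis using that m0sq by blast
  next
    case False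
    then have "Im m0 \<noteq> 0" using m0ri k(1) by auto
    then have "Im (- m0) < 0" using False by simp
    moreover have "(- m0)^2 = Complex 1 (-k)" using m0sq by simp
    ultimately show ?thesis using that by blast
  qed
  have muR: "Re \<mu> > 0"
  proof -
    have "Im (\<mu>^2) = -k" using mu by simp
    then have "2 * Re \<mu> * Im \<mu> = -k" by (simp add: power2_eq_square algebra_simps)
    then show ?thesis using muI k(1)
      by (smt (verit) mult_nonneg_nonpos mult_nonpos_nonpos)
  qed
  have mu0: "\<mu> \<noteq> 0" using muI by auto
  define a where "a = complex_of_real \<epsilon> / \<mu>"
  define ap where "ap = (Re a, Im a)"
  have cpa: "cpx ap = a" unfolding ap_def by simp
  have mua: "\<mu> * a = complex_of_real \<epsilon>" unfolding a_def using mu0 by simp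
  have Na: "NNf k (a^2) = 0" using NN_mu[OF mu, of a] unfolding mua by simp
  have Ma: "MMf k (a^2) > 0"
  proof -
    have "a^2 * Complex 1 (-k) = complex_of_real (\<epsilon>^2)" using mua mu
      by (metis mult.commute of_real_power power_mult_distrib)
    then have e0: "Re (a^2 * Complex 1 (-k)) = \<epsilon>^2" "Im (a^2 * Complex 1 (-k)) = 0"
      by (metis Re_complex_of_real, metis Im_complex_of_real)
    have e: "Re (a^2) + k * Im (a^2) = \<epsilon>^2" "Im (a^2) - k * Re (a^2) = 0"
      using e0 by (simp_all add: algebra_simps)
    then have q: "Im (a^2) = k * Re (a^2)" by simp
    have "Re (a^2) * (1 + k^2) = \<epsilon>^2" using e(1) unfolding q by (simp add: power2_eq_square algebra_simps)
    then have "Re (a^2) > 0" using eps k(1)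
      by (metis add_pos_nonneg zero_le_power2 zero_less_mult_pos2 zero_less_one zero_less_power)
    then show ?thesis unfolding MMf_def q using k(1) by simp
  qed
  have cmu: "cmod \<mu> > 1"
  proof -
    have "cmod (\<mu>^2) = sqrt (1 + k^2)" unfolding mu by (simp add: cmod_def)
    also have "\<dots> > 1" using k(1) by simp
    finally have "(cmod \<mu>)^2 > 1^2" by (simp add: norm_power)
    then show ?thesis by (rule power_less_imp_less_base) simp
  qed
  have ca: "cmod a < \<epsilon>"
    unfolding a_def norm_divide using eps cmu by (simp add: divide_less_eq)
  have apN: "ap \<in> N_eps \<epsilon>"
  proof -
    have "(fst ap)^2 + (snd ap)^2 = (cmod a)^2" unfolding ap_def cmod_power2 by simp
    moreover have "a \<noteq> 0" unfolding a_def using eps mu0 by simp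
    ultimately show ?thesis unfolding N_eps_def using ca eps
      by (simp add: power_strict_mono)
  qed
  define \<delta> where "\<delta> = \<epsilon>^2 / (2 * \<zeta>)"
  have dp: "\<delta> > 0" unfolding \<delta>_def using eps assms(2) by simp
  have dl: "\<delta> < \<epsilon>^2" unfolding \<delta>_def using eps assms(2) by (simp add: field_simps)
  define c where "c = Complex 0 (- sqrt \<delta>)"
  define cp where "cp = (0::real, - sqrt \<delta>)"
  have csq: "c^2 = complex_of_real (- \<delta>)" unfolding c_def using dp
    by (simp add: complex_eq_iff power2_eq_square)
  have Nc: "NNf k (c^2) > 0" unfolding csq NNf_def using k(1) dp by simp
  have Mc: "MMf k (c^2) < 0" unfolding csq MMf_def using k(1) dp by simp
  have Imc: "Im (\<mu> * c) < 0" unfolding c_def using muR dp by (simp add: mult_pos_pos)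
  have Rec: "Re (\<mu> * c) < 0" unfolding c_def using muI dp by (simp add: mult_neg_pos)
  have cpc: "cpx cp = c" unfolding cp_def c_def cpx_def by simp
  have notfut: "cp \<notin> Ifut \<epsilon> \<zeta> ap"
  proof
    assume "cp \<in> Ifut \<epsilon> \<zeta> ap"
    then have ch: "chron \<epsilon> \<zeta> ap cp" unfolding Ifut_def by simp
    obtain \<gamma> :: "real \<Rightarrow> real \<times> real" where g: "\<gamma> 0 = ap" "\<gamma> 1 = cp" "continuous_on {0..1} \<gamma>"
      and "\<And>t. t \<in> {0..1} \<Longrightarrow> \<gamma> t \<in> N_eps \<epsilon>" and mono: "\<And>s t. 0 \<le> s \<Longrightarrow> s < t \<Longrightarrow> t \<le> 1 \<Longrightarrow>
       NNf k ((cpx (\<gamma> s))^2) < NNf k ((cpx (\<gamma> t))^2) \<and> MMf k ((cpx (\<gamma> t))^2) < MMf k ((cpx (\<gamma> s))^2)"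
      using curve_props[OF k ch] by metis
    define g where "g t = - Re (\<mu> * cpx (\<gamma> t))" for t
    have gc: "continuous_on {0..1} g" unfolding g_def[abs_def]
      by (intro continuous_intros continuous_on_compose2[OF cpx_cont g(3)]) auto
    have "g 0 \<le> 0" "0 \<le> g 1" unfolding g_def g(1,2) cpa cpc using mua eps Rec by auto
    then obtain x where x: "0 \<le> x" "x \<le> 1" "g x = 0" using IVT'[of g 0 0 1] gc by auto
    have g0: "g 0 = - \<epsilon>" unfolding g_def g(1) cpa mua by simp
    then have "x \<noteq> 0" using x(3) eps by auto
    then have "NNf k ((cpx (\<gamma> 0))^2) < NNf k ((cpx (\<gamma> x))^2)" using mono[of 0 x] x by auto
    moreover have "NNf k ((cpx (\<gamma> x))^2) = 0" using NN_mu[OF mu] x(3) unfolding g_def by simp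
    ultimately show False unfolding g(1) cpa Na by simp
  qed
  define V where "V = {p. cmod (cpx p) < \<epsilon>} \<inter> {p. 0 < NNf k ((cpx p)^2)} \<inter> {p. MMf k ((cpx p)^2) < 0}
     \<inter> {p. Im (\<mu> * cpx p) < 0} \<inter> {p. (MMf k ((cpx p)^2))^2 * (1 + 2 * k^2) < 8 * k^2 * \<epsilon>^4}"
  have Vopen: "open V"
    unfolding V_def NNf_def MMf_def
    by (intro open_Int open_Collect_less continuous_intros continuous_on_compose2[OF cpx_cont]) auto
  have cV: "cp \<in> V"
  proof -
    have "(MMf k (c^2))^2 * (1 + 2 * k^2) < 8 * k^2 * \<epsilon>^4"
    proof -
      have "MMf k (c^2) = - k * \<delta>" unfolding csq MMf_def by simp
      then have "(MMf k (c^2))^2 * (1 + 2 * k^2) = k^2 * (\<delta>^2 * (1 + 2 * k^2))" by (simp add: power2_eq_square)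
      also have "\<delta>^2 * (1 + 2 * k^2) < 8 * \<epsilon>^4"
      proof -
        have z: "\<zeta> = 1 + k^2" using k by simp
        have "\<delta>^2 * (1 + 2 * k^2) = \<epsilon>^4 * ((1 + 2*k^2) / (4 * \<zeta>^2))" unfolding \<delta>_def
          by (simp add: power2_eq_square field_simps power4_eq_xxxx)
        also have "(1 + 2*k^2) / (4 * \<zeta>^2) < 8"
        proof -
          have "1 + 2*k^2 < 2 * \<zeta>" unfolding z by simp
          also have "\<dots> < 32 * \<zeta>^2" using assms(2) by (simp add: power2_eq_square)
          finally show ?thesis using assms(2) by (simp add: divide_less_eq)
        qed
        then have "\<epsilon>^4 * ((1 + 2*k^2) / (4 * \<zeta>^2)) < \<epsilon>^4 * 8" using eps by (intro mult_strict_left_mono) auto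
        finally show ?thesis by simp
      qed
      then have "k^2 * (\<delta>^2 * (1 + 2 * k^2)) < k^2 * (8 * \<epsilon>^4)" using k(1) by simp
      finally show ?thesis by simp
    qed
    moreover have "cmod c < \<epsilon>"
    proof -
      have "cmod c = sqrt \<delta>" unfolding c_def cmod_def using dp by simp
      also have "\<dots> < sqrt (\<epsilon>^2)" using dl by (simp only: real_sqrt_less_iff)
      also have "\<dots> = \<epsilon>" using eps by simp
      finally show ?thesis .
    qed
    ultimately show ?thesis unfolding V_def using Nc Mc Imc by (simp add: cpc)
  qed
  have Vsub: "V \<subseteq> {c' \<in> N_eps \<epsilon>. \<forall>u\<in>Ipast \<epsilon> \<zeta> ap. chron \<epsilon> \<zeta> u c'}"
  proof
    fix p assume pV: "p \<in> V"
    have pN: "p \<in> N_eps \<epsilon>"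
    proof -
      have "(fst p)^2 + (snd p)^2 = (cmod (cpx p))^2" unfolding cpx_def cmod_power2 by simp
      moreover have "cpx p \<noteq> 0" using pV unfolding V_def NNf_def by auto
      ultimately show ?thesis unfolding N_eps_def using pV eps
        by (simp add: V_def power_strict_mono)
    qed
    have "chron \<epsilon> \<zeta> u p" if "u \<in> Ipast \<epsilon> \<zeta> ap" for u
    proof -
      have ch: "chron \<epsilon> \<zeta> u ap" using that unfolding Ipast_def by simp
      obtain \<gamma> :: "real \<Rightarrow> real \<times> real" where g: "\<gamma> 0 = u" "\<gamma> 1 = ap" "continuous_on {0..1} \<gamma>"
        and gN: "\<And>t. t \<in> {0..1} \<Longrightarrow> \<gamma> t \<in> N_eps \<epsilon>"
        and mono: "\<And>s t. 0 \<le> s \<Longrightarrow> s < t \<Longrightarrow> t \<le> 1 \<Longrightarrow>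
         NNf k ((cpx (\<gamma> s))^2) < NNf k ((cpx (\<gamma> t))^2) \<and> MMf k ((cpx (\<gamma> t))^2) < MMf k ((cpx (\<gamma> s))^2)"
        using curve_props[OF k ch] by metis
      have m01: "NNf k ((cpx u)^2) < 0" "MMf k ((cpx u)^2) > 0"
        using mono[of 0 1] g Na Ma cpa by auto
      have uN: "u \<in> N_eps \<epsilon>" using gN[of 0] g(1) by simp
      have cu: "cmod (cpx u) < \<epsilon>"
      proof -
        have "(cmod (cpx u))^2 < \<epsilon>^2" using uN unfolding N_eps_def cpx_def cmod_power2 by simp
        then show ?thesis by (rule power_less_imp_less_base) (use eps in simp)
      qed
      have Ru: "Re (\<mu> * cpx u) > 0"
      proof (rule ccontr)
        assume "\<not> Re (\<mu> * cpx u) > 0"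
        define g where "g t = Re (\<mu> * cpx (\<gamma> t))" for t
        have gc: "continuous_on {0..1} g" unfolding g_def[abs_def]
          by (intro continuous_intros continuous_on_compose2[OF cpx_cont g(3)]) auto
        have "g 0 \<le> 0" "0 \<le> g 1" unfolding g_def g(1,2) cpa using mua eps \<open>\<not> Re (\<mu> * cpx u) > 0\<close> by auto
        then obtain x where x: "0 \<le> x" "x \<le> 1" "g x = 0" using IVT'[of g 0 0 1] gc by auto
        have g1: "g 1 = \<epsilon>" unfolding g_def g(2) cpa mua by simp
        then have "x \<noteq> 1" using x(3) eps by auto
        then have "NNf k ((cpx (\<gamma> x))^2) < NNf k ((cpx (\<gamma> 1))^2)" using mono[of x 1] x by auto
        moreover have "NNf k ((cpx (\<gamma> x))^2) = 0" using NN_mu[OF mu] x(3) unfolding g_def by simp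
        ultimately show False unfolding g(2) cpa Na by simp
      qed
      have Iu: "Im (\<mu> * cpx u) < 0"
      proof -
        have "2 * Re (\<mu> * cpx u) * Im (\<mu> * cpx u) < 0" using m01(1) NN_mu[OF mu] by simp
        then show ?thesis using Ru by (simp add: mult_less_0_iff)
      qed
      have pc: "cmod (cpx p) < \<epsilon>" "NNf k ((cpx p)^2) > 0" "MMf k ((cpx p)^2) < 0" "Im (\<mu> * cpx p) < 0"
        "(MMf k ((cpx p)^2))^2 * (1 + 2 * k^2) < 8 * k^2 * \<epsilon>^4"
        using pV unfolding V_def by auto
      have "chron \<epsilon> \<zeta> (Re (cpx u), Im (cpx u)) (Re (cpx p), Im (cpx p))"
        by (rule reach[OF k mu eps cu m01 Iu pc])
      then show ?thesis by simp
    qed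
    then show "p \<in> {c' \<in> N_eps \<epsilon>. \<forall>u\<in>Ipast \<epsilon> \<zeta> ap. chron \<epsilon> \<zeta> u c'}" using pN by simp
  qed
  have "cp \<in> up \<epsilon> \<zeta> (Ipast \<epsilon> \<zeta> ap)"
    unfolding up_def using Vopen cV Vsub interior_maximal by blast
  then have "Ifut \<epsilon> \<zeta> ap \<noteq> up \<epsilon> \<zeta> (Ipast \<epsilon> \<zeta> ap)" using notfut by blast
  then show ?thesis unfolding causally_continuous_def using apN by blast
qed

end
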